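(* Fix $r_{max}\ge 1$ and let $\tilde\gamma = 1-\sqrt{1-r_{max}^{-1}}$. The function $$\tilde w(\gamma) = \begin{cases} 1 & 0\le\gamma\le\tilde\gamma,\\ (\tilde\gamma/\gamma)^2 & \tilde\gamma<\gamma\le 1\end{cases}$$ belongs to $W(r_{max})$. Further, for every $w\in W(r_{max})$, $$\inf_\gamma h(\gamma,\tilde w) \ge \inf_\gamma h(\gamma, w).$$
   Context: Let $P$ be the uniform measure on $[0,1]$. For a probability measure $Q$ on $[0,1]$ with density $r = dQ/dP$ that is unimodal (non-decreasing on $[0,x^*]$ and non-increasing on $[x^*,1]$ for some maximiser $x^*$) with $\sup r = r_{max}$, its width function is $w(\gamma) = \inf\{\delta\in[0,1] : \exists z\in[0,1],\ S(\gamma)\subseteq[z,z+\delta]\}$ for $\gamma\in[0,1]$, where $S(\gamma) = \{x\in[0,1]: r(x)\ge\gamma r_{max}\}$. $W(r_{max})$ denotes the set of all width functions arising in this way from such $Q$ with the given value $r_{max}$. For a width function $w$, $h(\gamma,w) = \log\frac{1}{w(\gamma)} + 2\log\frac1\gamma$. *)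

theory Defs
  imports "HOL-Analysis.Analysis"
begin

text \<open>A density r = dQ/dP of a probability measure Q on [0,1] w.r.t. the uniform
  measure P: nonnegative on [0,1], integrating to 1 over [0,1].\<close>
definition admissible_density :: "(real \<Rightarrow> real) \<Rightarrow> real \<Rightarrow> bool" where
  "admissible_density r rmax \<longleftrightarrow>
     (\<forall>x\<in>{0..1}. 0 \<le> r x) \<and> (r has_integral 1) {0..1} \<and>
     (\<exists>xs\<in>{0..1}. mono_on {0..xs} r \<and> antimono_on {xs..1} r) \<and>
     rmax = (SUP x\<in>{0..1}. r x)"

definition superlevel :: "(real \<Rightarrow> real) \<Rightarrow> real \<Rightarrow> real \<Rightarrow> real set" where
  "superlevel r rmax \<gamma> = {x\<in>{0..1}. r x \<ge> \<gamma> * rmax}"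

definition width :: "(real \<Rightarrow> real) \<Rightarrow> real \<Rightarrow> real \<Rightarrow> real" where
  "width r rmax \<gamma> = Inf {\<delta>\<in>{0..1}. \<exists>z\<in>{0..1}. superlevel r rmax \<gamma> \<subseteq> {z..z+\<delta>}}"

definition Wset :: "real \<Rightarrow> (real \<Rightarrow> real) set" where
  "Wset rmax = {w. \<exists>r. admissible_density r rmax \<and> (\<forall>\<gamma>\<in>{0..1}. w \<gamma> = width r rmax \<gamma>)}"

definition hfun :: "real \<Rightarrow> (real \<Rightarrow> real) \<Rightarrow> ereal" where
  "hfun \<gamma> w = (if w \<gamma> > 0 \<and> \<gamma> > 0 then ereal (ln (1 / w \<gamma>) + 2 * ln (1 / \<gamma>)) else \<infinity>)"

definition gamma_tilde :: "real \<Rightarrow> real" where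
  "gamma_tilde rmax = 1 - sqrt (1 - 1 / rmax)"

definition w_tilde :: "real \<Rightarrow> real \<Rightarrow> real" where
  "w_tilde rmax \<gamma> = (if \<gamma> \<le> gamma_tilde rmax then 1 else (gamma_tilde rmax / \<gamma>)^2)"

end

theory Submission
  imports Defs
begin


lemma emeasure_leb: "A \<in> sets lborel \<Longrightarrow> emeasure lebesgue A = emeasure lborel A"
  by (metis nn_integral_completion nn_integral_indicator sets_completionI_sets)

lemma sf_leb: "sigma_finite_measure (lebesgue :: real measure)"
proof -
  obtain A :: "real set set" where A: "countable A" "A \<subseteq> sets lborel" "\<Union>A = space lborel" "\<forall>a\<in>A. emeasure lborel a \<noteq> \<infinity>"
    using lborel.sigma_finite_countable by blast
  show ?thesis
    apply unfold_locales
    apply (rule exI[of _ A]) using A by (auto simp: emeasure_leb)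
qed

lemma psf: "pair_sigma_finite (lebesgue :: real measure) (lebesgue :: real measure)"
  unfolding pair_sigma_finite_def using sf_leb by simp

lemma meas: fixes g :: "real \<Rightarrow> real" assumes g: "g \<in> borel_measurable lebesgue"
  shows "(\<lambda>(x,y). indicator {p. 0 \<le> snd p \<and> snd p < g (fst p)} (x,y) :: ennreal) \<in> borel_measurable (lebesgue \<Otimes>\<^sub>M lebesgue)"
proof -
  have 1: "(\<lambda>p. g (fst p)) \<in> borel_measurable (lebesgue \<Otimes>\<^sub>M lebesgue)"
    by (rule measurable_compose[OF measurable_fst g])
  have 2: "(\<lambda>p::real\<times>real. snd p) \<in> borel_measurable (lebesgue \<Otimes>\<^sub>M lebesgue)"
    by (rule measurable_snd'') (rule measurable_completion, simp)
  have "{p. 0 \<le> snd p \<and> snd p < g (fst p)} \<in> sets (lebesgue \<Otimes>\<^sub>M lebesgue)"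
  proof -
    have a: "{p \<in> space (lebesgue \<Otimes>\<^sub>M lebesgue). snd p < g (fst p)} \<in> sets (lebesgue \<Otimes>\<^sub>M lebesgue)"
      by (rule borel_measurable_less[OF 2 1])
    have b: "{p \<in> space (lebesgue \<Otimes>\<^sub>M lebesgue). (0::real) \<le> snd (p::real\<times>real)} \<in> sets (lebesgue \<Otimes>\<^sub>M lebesgue)"
      using borel_measurable_le[OF borel_measurable_const 2] by (simp add: space_pair_measure)
    have "{p. 0 \<le> snd p \<and> snd p < g (fst p)} = {p \<in> space (lebesgue \<Otimes>\<^sub>M lebesgue). (0::real) \<le> snd (p::real\<times>real)} \<inter> {p \<in> space (lebesgue \<Otimes>\<^sub>M lebesgue). snd p < g (fst p)}"
      by (auto simp: space_pair_measure)
    then show ?thesis using sets.Int[OF b a] by (simp only:)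
  qed
  then have "indicator {p. 0 \<le> snd p \<and> snd p < g (fst p)} \<in> borel_measurable (lebesgue \<Otimes>\<^sub>M lebesgue)"
    by (rule borel_measurable_indicator)
  moreover have "(\<lambda>(x,y). indicator {p. 0 \<le> snd p \<and> snd p < g (fst p)} (x,y) :: ennreal) = indicator {p. 0 \<le> snd p \<and> snd p < g (fst p)}"
    by (auto simp: fun_eq_iff)
  ultimately show ?thesis by simp
qed


lemma width_pair:
  assumes "x \<in> superlevel r rmax \<gamma>" "y \<in> superlevel r rmax \<gamma>"
  shows "\<bar>x - y\<bar> \<le> width r rmax \<gamma>"
  unfolding width_def
proof (rule cInf_greatest)
  have "superlevel r rmax \<gamma> \<subseteq> {0..0+1}" by (auto simp: superlevel_def)
  then show "{\<delta> \<in> {0..1}. \<exists>z\<in>{0..1}. superlevel r rmax \<gamma> \<subseteq> {z..z + \<delta>}} \<noteq> {}" by force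
next
  fix \<delta> assume "\<delta> \<in> {\<delta> \<in> {0..1}. \<exists>z\<in>{0..1}. superlevel r rmax \<gamma> \<subseteq> {z..z + \<delta>}}"
  then obtain z where "superlevel r rmax \<gamma> \<subseteq> {z..z + \<delta>}" by auto
  with assms have "x \<in> {z..z + \<delta>}" "y \<in> {z..z + \<delta>}" by blast+
  then show "\<bar>x - y\<bar> \<le> \<delta>" by (simp add: abs_le_iff)
qed

lemma ind_bound:
  fixes T :: "real set"
  assumes "T \<subseteq> {c..d}" "c \<le> d"
  shows "(\<integral>\<^sup>+x. indicator T x \<partial>lebesgue) \<le> ennreal (d - c)"
proof -
  have "(\<integral>\<^sup>+x. indicator T x \<partial>lebesgue) = (\<integral>\<^sup>+x. indicator T x \<partial>lborel)"
    by (rule nn_integral_completion)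
  also have "\<dots> \<le> (\<integral>\<^sup>+x. indicator {c..d} x \<partial>lborel)"
    by (intro nn_integral_mono) (use assms in \<open>auto simp: indicator_def\<close>)
  also have "\<dots> = ennreal (d - c)" using assms by simp
  finally show ?thesis .
qed


lemma part2:
  fixes r :: "real \<Rightarrow> real"
  assumes rmax: "rmax \<ge> 1" and adm: "admissible_density r rmax"
    and s: "0 < s" "s < gamma_tilde rmax"
    and wb: "\<And>\<gamma>. 0 < \<gamma> \<Longrightarrow> \<gamma> \<le> 1 \<Longrightarrow> width r rmax \<gamma> \<le> s^2/\<gamma>^2"
  shows False
proof -
  from adm obtain xs where nonneg: "\<forall>x\<in>{0..1}. 0 \<le> r x" and int: "(r has_integral 1) {0..1}"
    and xs: "xs \<in> {0..1}" "mono_on {0..xs} r" "antimono_on {xs..1} r"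
    and sup: "rmax = (SUP x\<in>{0..1}. r x)"
    unfolding admissible_density_def by blast
  have le_xs: "r x \<le> r xs" if "x \<in> {0..1}" for x
  proof (cases "x \<le> xs")
    case True then show ?thesis using that xs by (auto intro: mono_onD[OF xs(2)])
  next
    case False then show ?thesis using that xs using monotone_onD[OF xs(3), of xs x] by auto
  qed
  have rle: "r x \<le> rmax" if "x \<in> {0..1}" for x
    unfolding sup using that le_xs by (intro cSUP_upper bdd_aboveI2) auto
  have rpos: "rmax > 0" using rmax by simp
  have gt: "0 < gamma_tilde rmax" "gamma_tilde rmax \<le> 1"
  proof -
    have "sqrt (1 - 1/rmax) < 1" using rpos by simp
    moreover have "0 \<le> 1 - 1/rmax" using rmax by simp
    ultimately show "0 < gamma_tilde rmax" "gamma_tilde rmax \<le> 1" unfolding gamma_tilde_def by auto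
  qed
  have gid: "2 * gamma_tilde rmax - (gamma_tilde rmax)^2 = 1 / rmax"
  proof -
    have "(1 - gamma_tilde rmax)^2 = 1 - 1/rmax" unfolding gamma_tilde_def using rmax by simp
    then show ?thesis by (simp add: power2_eq_square algebra_simps)
  qed
  define g where "g x = r x / rmax * indicator {0..1} x" for x
  have int': "((\<lambda>x. r x / rmax) has_integral (1/rmax)) {0..1}"
    using has_integral_mult_left[OF int, of "1/rmax"] by (simp add: field_simps)
  have gmeas: "g \<in> borel_measurable lebesgue"
    using has_integral_implies_lebesgue_measurable_real[OF int'] unfolding g_def .
  have g01: "0 \<le> g x" "g x \<le> 1" for x
    using nonneg rle rpos by (auto simp: g_def indicator_def)
  have gint: "(\<integral>\<^sup>+x. ennreal (g x) \<partial>lebesgue) = ennreal (1/rmax)"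
  proof -
    have "(\<integral>\<^sup>+x. ennreal (g x) \<partial>lebesgue) = (\<integral>\<^sup>+x. ennreal (r x / rmax) * indicator {0..1} x \<partial>lborel)"
      unfolding nn_integral_completion by (intro nn_integral_cong) (auto simp: g_def indicator_def)
    also have "\<dots> = ennreal (1/rmax)"
      by (rule nn_integral_has_integral_lebesgue'[OF _ int']) (use nonneg rpos in auto)
    finally show ?thesis .
  qed
  define S where "S = {p::real\<times>real. 0 \<le> snd p \<and> snd p < g (fst p)}"
  have layer: "ennreal (g x) = (\<integral>\<^sup>+\<gamma>. indicator S (x,\<gamma>) \<partial>lebesgue)" for x
  proof -
    have "(\<integral>\<^sup>+\<gamma>. indicator S (x,\<gamma>) \<partial>lebesgue) = (\<integral>\<^sup>+\<gamma>. indicator {0..<g x} \<gamma> \<partial>lborel)"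
      unfolding nn_integral_completion by (intro nn_integral_cong) (auto simp: S_def indicator_def)
    also have "\<dots> = ennreal (g x)" using g01[of x] by simp
    finally show ?thesis by simp
  qed
  define B where "B \<gamma> = (if \<gamma> \<le> s then 1 else s^2/\<gamma>^2)" for \<gamma> :: real
  have inner: "(\<integral>\<^sup>+x. indicator S (x,\<gamma>) \<partial>lebesgue) \<le> ennreal (B \<gamma>) * indicator {0..1} \<gamma>" for \<gamma>
  proof -
    define T where "T = {x. 0 \<le> \<gamma> \<and> \<gamma> < g x}"
    have eqT: "(\<lambda>x. indicator S (x,\<gamma>) :: ennreal) = indicator T"
      by (auto simp: S_def T_def indicator_def fun_eq_iff)
    show ?thesis
    proof (cases "\<gamma> < 0 \<or> \<gamma> \<ge> 1")
      case True
      then have "T = {}" using g01 by (auto simp: T_def) (meson le_less_trans not_le)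
      then show ?thesis unfolding eqT by simp
    next
      case False
      then have g01': "0 \<le> \<gamma>" "\<gamma> < 1" by auto
      have T01: "T \<subseteq> {0..1}"
        using g01' by (auto simp: T_def g_def indicator_def split: if_splits)
      show ?thesis
      proof (cases "\<gamma> \<le> s")
        case True
        have "(\<integral>\<^sup>+x. indicator T x \<partial>lebesgue) \<le> ennreal (1 - 0)"
          by (rule ind_bound[OF T01]) simp
        then show ?thesis unfolding eqT using True g01' by (simp add: B_def)
      next
        case False
        have gp: "0 < \<gamma>" using False s by simp
        have Tsup: "T \<subseteq> superlevel r rmax \<gamma>"
        proof
          fix x assume x: "x \<in> T"
          then have "x \<in> {0..1}" using T01 by auto
          moreover have "\<gamma> < r x / rmax" using x \<open>x \<in> {0..1}\<close> by (simp add: T_def g_def)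
          then have "\<gamma> * rmax \<le> r x" using rpos by (simp add: field_simps)
          ultimately show "x \<in> superlevel r rmax \<gamma>" by (simp add: superlevel_def)
        qed
        have diam: "y - x \<le> s^2/\<gamma>^2" if "x \<in> T" "y \<in> T" for x y
        proof -
          have "\<bar>y - x\<bar> \<le> width r rmax \<gamma>" using Tsup that by (intro width_pair) auto
          also have "\<dots> \<le> s^2/\<gamma>^2" using wb[of \<gamma>] gp g01' by simp
          finally show ?thesis by simp
        qed
        show ?thesis
        proof (cases "T = {}")
          case True then show ?thesis unfolding eqT by simp
        next
          case False
          define a where "a = Inf T"
          have bdd: "bdd_below T" using T01 by (meson bdd_below_Icc bdd_below_mono)
          have sub: "T \<subseteq> {a..a + s^2/\<gamma>^2}"
          proof
            fix y assume y: "y \<in> T"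
            have "a \<le> y" unfolding a_def using y bdd by (rule cInf_lower)
            moreover have "y - s^2/\<gamma>^2 \<le> a" unfolding a_def
              using False by (rule cInf_greatest) (use diam[OF _ y] in force)
            ultimately show "y \<in> {a..a + s^2/\<gamma>^2}" by simp
          qed
          have "(\<integral>\<^sup>+x. indicator T x \<partial>lebesgue) \<le> ennreal (a + s^2/\<gamma>^2 - a)"
            by (rule ind_bound[OF sub]) simp
          then show ?thesis unfolding eqT using \<open>\<not> \<gamma> \<le> s\<close> g01' by (simp add: B_def)
        qed
      qed
    qed
  qed
  have Bint: "(B has_integral (2 * s - s ^ 2)) {0..1}"
  proof -
    have s1: "s \<le> 1" using s gt by simp
    have i1: "(B has_integral s) {0..s}"
    proof -
      have "((\<lambda>x. 1::real) has_integral s) {0..s}" using has_integral_const_real[of "1::real" 0 s] s by simp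
      then show ?thesis by (rule has_integral_eq[rotated]) (auto simp: B_def)
    qed
    have i2: "(B has_integral (s - s^2)) {s..1}"
    proof -
      have "((\<lambda>x. s^2/x^2) has_integral ((-(s^2)/1) - (-(s^2)/s))) {s..1}"
      proof (rule fundamental_theorem_of_calculus)
        show "s \<le> 1" by (rule s1)
        fix x assume x: "x \<in> {s..1}"
        then have "x \<noteq> 0" using s by auto
        then show "((\<lambda>x. - (s^2) / x) has_vector_derivative s^2/x^2) (at x within {s..1})"
          by (auto intro!: derivative_eq_intros simp: has_real_derivative_iff_has_vector_derivative[symmetric] power2_eq_square field_simps)
      qed
      moreover have "(-(s^2)/1) - (-(s^2)/s) = s - s^2" using s by (simp add: power2_eq_square field_simps)
      ultimately have "((\<lambda>x. s^2/x^2) has_integral (s - s^2)) {s..1}" by simp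
      then show ?thesis by (rule has_integral_eq[rotated]) (use s in \<open>auto simp: B_def\<close>)
    qed
    have "(B has_integral (s + (s - s^2))) {0..1}"
      by (rule has_integral_combine[OF _ s1 i1 i2]) (use s in simp)
    then show ?thesis by (simp add: algebra_simps)
  qed
  have "ennreal (1/rmax) = (\<integral>\<^sup>+x. (\<integral>\<^sup>+\<gamma>. indicator S (x,\<gamma>) \<partial>lebesgue) \<partial>lebesgue)"
    unfolding gint[symmetric] layer ..
  also have "\<dots> = (\<integral>\<^sup>+\<gamma>. (\<integral>\<^sup>+x. indicator S (x,\<gamma>) \<partial>lebesgue) \<partial>lebesgue)"
    by (rule pair_sigma_finite.Fubini'[OF psf, symmetric]) (use meas[OF gmeas] in \<open>simp add: S_def\<close>)
  also have "\<dots> \<le> (\<integral>\<^sup>+\<gamma>. ennreal (B \<gamma>) * indicator {0..1} \<gamma> \<partial>lebesgue)"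
    by (intro nn_integral_mono inner)
  also have "\<dots> = ennreal (2 * s - s ^ 2)"
    unfolding nn_integral_completion
    by (rule nn_integral_has_integral_lebesgue'[OF _ Bint]) (auto simp: B_def)
  finally have le: "ennreal (1/rmax) \<le> ennreal (2 * s - s ^ 2)" .
  have nn: "0 \<le> 2 * s - s ^ 2"
  proof -
    have "0 \<le> s * (2 - s)" using s gt by simp
    then show ?thesis by (simp add: power2_eq_square algebra_simps)
  qed
  from le nn have "1/rmax \<le> 2 * s - s ^ 2" by (simp add: ennreal_le_iff)
  moreover have "2 * s - s ^ 2 < 2 * gamma_tilde rmax - (gamma_tilde rmax)^2"
  proof -
    have "(1 - gamma_tilde rmax)^2 < (1 - s)^2" using s gt by (intro power_strict_mono) auto
    then show ?thesis by (simp add: power2_eq_square algebra_simps)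
  qed
  ultimately show False using gid by simp
qed


lemma gt_props:
  assumes rmax: "rmax \<ge> 1"
  shows "0 < gamma_tilde rmax" "gamma_tilde rmax \<le> 1"
    "2 * gamma_tilde rmax - (gamma_tilde rmax)^2 = 1 / rmax"
proof -
  have rpos: "rmax > 0" using rmax by simp
  have "sqrt (1 - 1/rmax) < 1" using rpos by simp
  moreover have "0 \<le> 1 - 1/rmax" using rmax by simp
  ultimately show "0 < gamma_tilde rmax" "gamma_tilde rmax \<le> 1" unfolding gamma_tilde_def by auto
  have "(1 - gamma_tilde rmax)^2 = 1 - 1/rmax" unfolding gamma_tilde_def using rmax by simp
  then show "2 * gamma_tilde rmax - (gamma_tilde rmax)^2 = 1 / rmax" by (simp add: power2_eq_square algebra_simps)
qed

lemma inf_width: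
  assumes "0 \<le> a" "a \<le> (1::real)"
  shows "Inf {\<delta>\<in>{0..1}. \<exists>z\<in>{0..1}. {0..a} \<subseteq> {z..z+\<delta>}} = a"
proof -
  have "{\<delta>\<in>{0..1}. \<exists>z\<in>{0..1}. {0..a} \<subseteq> {z..z+\<delta>}} = {a..1}"
  proof (intro set_eqI iffI)
    fix \<delta> assume "\<delta> \<in> {\<delta>\<in>{0..1}. \<exists>z\<in>{0..1}. {0..a} \<subseteq> {z..z+\<delta>}}"
    then obtain z where z: "z \<in> {0..1}" "{0..a} \<subseteq> {z..z+\<delta>}" "\<delta> \<in> {0..1}" by blast
    have "0 \<in> {z..z+\<delta>}" "a \<in> {z..z+\<delta>}" using z assms by auto
    then show "\<delta> \<in> {a..1}" using z by auto
  next
    fix \<delta> :: real assume "\<delta> \<in> {a..1}"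
    then show "\<delta> \<in> {\<delta>\<in>{0..1}. \<exists>z\<in>{0..1}. {0..a} \<subseteq> {z..z+\<delta>}}" using assms
      by (auto intro!: bexI[of _ 0])
  qed
  then show ?thesis using assms by simp
qed

lemma part1:
  assumes rmax: "rmax \<ge> 1"
  shows "w_tilde rmax \<in> Wset rmax"
proof -
  define G where "G = gamma_tilde rmax"
  have G: "0 < G" "G \<le> 1" "2 * G - G^2 = 1 / rmax" using gt_props[OF rmax] by (auto simp: G_def)
  have rpos: "rmax > 0" using rmax by simp
  define r where "r x = (if x \<le> G^2 then rmax else rmax * G / sqrt x)" for x
  have G2: "0 < G^2" "G^2 \<le> 1" using G by (auto simp: power_le_one)
  have sqG: "sqrt (G^2) = G" using G by simp
  have sqpos: "0 < sqrt x" if "\<not> x \<le> G^2" for x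
  proof -
    have "0 < x" using that G2(1) by linarith
    then show ?thesis by simp
  qed
  have big: "G < sqrt x" if "G^2 < x" for x
    using that G real_less_rsqrt by blast
  have rle: "r x \<le> rmax" if "0 \<le> x" for x
  proof (cases "x \<le> G^2")
    case False
    then have "G < sqrt x" by (intro big) simp
    moreover have "0 < sqrt x" using False by (rule sqpos)
    ultimately have "G / sqrt x \<le> 1" using G by (subst divide_le_eq_1) auto
    then have "rmax * (G / sqrt x) \<le> rmax * 1" using rpos by (intro mult_left_mono) auto
    then show ?thesis using False by (simp add: r_def)
  qed (simp add: r_def)
  have r0: "r 0 = rmax" using G2 by (simp add: r_def)
  have rnn: "0 \<le> r x" for x using G rpos sqpos[of x] by (auto simp: r_def intro!: divide_nonneg_pos)
  have anti: "r y \<le> r x" if "0 \<le> x" "x \<le> y" for x y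
  proof (cases "y \<le> G^2")
    case True then show ?thesis using that by (simp add: r_def)
  next
    case False
    show ?thesis
    proof (cases "x \<le> G^2")
      case True then show ?thesis using rle[of y] that r_def False by (simp add: r_def)
    next
      case False2: False
      have "0 < sqrt x" using False2 by (rule sqpos)
      moreover have "sqrt x \<le> sqrt y" using that by simp
      ultimately have "rmax * G / sqrt y \<le> rmax * G / sqrt x" using G rpos
        by (intro divide_left_mono) auto
      then show ?thesis using False False2 by (simp add: r_def)
    qed
  qed
  have int: "(r has_integral 1) {0..1}"
  proof -
    have i1: "(r has_integral (rmax * G^2)) {0..G^2}"
    proof -
      have "((\<lambda>x. rmax) has_integral (rmax * G^2)) {0..G^2}"
        using has_integral_const_real[of rmax 0 "G^2"] G2 by (simp add: mult.commute)
      then show ?thesis by (rule has_integral_eq[rotated]) (simp add: r_def)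
    qed
    have i2: "(r has_integral (2 * rmax * G * sqrt 1 - 2 * rmax * G * sqrt (G^2))) {G^2..1}"
    proof -
      have "((\<lambda>x. rmax * G / sqrt x) has_integral (2 * rmax * G * sqrt 1 - 2 * rmax * G * sqrt (G^2))) {G^2..1}"
      proof (rule fundamental_theorem_of_calculus)
        show "G^2 \<le> 1" by (rule G2(2))
        fix x assume x: "x \<in> {G^2..1}"
        then have xp: "0 < x" using G2(1) by (simp only: atLeastAtMost_iff) linarith
        then show "((\<lambda>x. 2 * rmax * G * sqrt x) has_vector_derivative rmax * G / sqrt x) (at x within {G^2..1})"
          by (auto intro!: derivative_eq_intros simp: has_real_derivative_iff_has_vector_derivative[symmetric] field_simps)
      qed
      then show ?thesis
      proof (rule has_integral_eq[rotated])
        fix x assume "x \<in> {G^2..1}"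
        then show "rmax * G / sqrt x = r x"
          using sqG G by (cases "x = G^2") (auto simp: r_def)
      qed
    qed
    have "(r has_integral (rmax * G^2 + (2 * rmax * G * sqrt 1 - 2 * rmax * G * sqrt (G^2)))) {0..1}"
      by (rule has_integral_combine[OF _ G2(2) i1 i2]) (use G2 in simp)
    moreover have "rmax * G^2 + (2 * rmax * G * sqrt 1 - 2 * rmax * G * sqrt (G^2)) = 1"
    proof -
      have "rmax * G^2 + (2 * rmax * G * sqrt 1 - 2 * rmax * G * sqrt (G^2)) = rmax * (2 * G - G^2)"
        using sqG by (simp add: power2_eq_square algebra_simps)
      also have "\<dots> = 1" using G rpos by simp
      finally show ?thesis .
    qed
    ultimately show ?thesis by simp
  qed
  have sup: "rmax = (SUP x\<in>{0..1}. r x)"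
  proof (rule antisym)
    show "rmax \<le> (SUP x\<in>{0..1}. r x)" unfolding r0[symmetric]
      by (rule cSUP_upper) (use rle in \<open>auto intro!: bdd_aboveI2\<close>)
    show "(SUP x\<in>{0..1}. r x) \<le> rmax" by (rule cSUP_least) (use rle in auto)
  qed
  have adm: "admissible_density r rmax"
    unfolding admissible_density_def
  proof (intro conjI)
    show "\<forall>x\<in>{0..1}. 0 \<le> r x" using rnn by auto
    show "(r has_integral 1) {0..1}" by (rule int)
    show "\<exists>xs\<in>{0..1}. mono_on {0..xs} r \<and> antimono_on {xs..1} r"
      by (rule bexI[of _ 0]) (auto intro!: monotone_onI anti)
    show "rmax = (SUP x\<in>{0..1}. r x)" by (rule sup)
  qed
  have wid: "w_tilde rmax \<gamma> = width r rmax \<gamma>" if g: "\<gamma> \<in> {0..1}" for \<gamma>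
  proof (cases "\<gamma> \<le> G")
    case True
    have "superlevel r rmax \<gamma> = {0..1}"
    proof (intro set_eqI iffI)
      fix x assume x: "x \<in> {0..(1::real)}"
      have "\<gamma> * rmax \<le> r x"
      proof (cases "x \<le> G^2")
        case True
        then show ?thesis using \<open>\<gamma> \<le> G\<close> G g rpos by (simp add: r_def)
      next
        case False
        have "sqrt x \<le> 1" using x by simp
        moreover have "0 < sqrt x" using False by (rule sqpos)
        ultimately have "G \<le> G / sqrt x" using G by (simp add: le_divide_eq)
        then have "\<gamma> \<le> G / sqrt x" using True by simp
        then have "\<gamma> * rmax \<le> G / sqrt x * rmax" using rpos by (intro mult_right_mono) auto
        then show ?thesis using False by (simp add: r_def mult.commute)
      qed
      then show "x \<in> superlevel r rmax \<gamma>" using x by (simp add: superlevel_def)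
    qed (auto simp: superlevel_def)
    then show ?thesis using True inf_width[of 1] by (simp add: w_tilde_def G_def width_def)
  next
    case False
    have gp: "0 < \<gamma>" using False G by simp
    define a where "a = (G/\<gamma>)^2"
    have a: "0 \<le> a" "a \<le> 1" "G^2 \<le> a" using False G g gp
      by (auto simp: a_def power_le_one power_divide divide_le_eq_1 le_divide_eq intro!: power_mono mult_le_one)
    have sqa: "sqrt a = G / \<gamma>" using G gp by (simp add: a_def)
    have "superlevel r rmax \<gamma> = {0..a}"
    proof (intro set_eqI)
      fix x
      show "x \<in> superlevel r rmax \<gamma> \<longleftrightarrow> x \<in> {0..a}"
      proof (cases "x \<le> G^2")
        case True
        then show ?thesis using g a rpos by (auto simp: superlevel_def r_def)
      next
        case F: False
        have sx: "0 < sqrt x" using F by (rule sqpos)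
        have "\<gamma> * rmax \<le> rmax * G / sqrt x \<longleftrightarrow> \<gamma> * sqrt x \<le> G"
          using sx rpos by (simp add: field_simps)
        also have "\<dots> \<longleftrightarrow> sqrt x \<le> sqrt a" using gp by (simp add: sqa field_simps)
        also have "\<dots> \<longleftrightarrow> x \<le> a" by simp
        finally show ?thesis using F a G2 by (auto simp: superlevel_def r_def)
      qed
    qed
    then show ?thesis using False inf_width[OF a(1,2)] by (simp add: w_tilde_def G_def width_def a_def)
  qed
  show ?thesis unfolding Wset_def using adm wid by blast
qed


lemma h_tilde_lower:
  assumes rmax: "rmax \<ge> 1" and g: "\<gamma> \<in> {0..1}"
  shows "ereal (- 2 * ln (gamma_tilde rmax)) \<le> hfun \<gamma> (w_tilde rmax)"
proof -
  define G where "G = gamma_tilde rmax"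
  have G: "0 < G" "G \<le> 1" using gt_props[OF rmax] by (auto simp: G_def)
  show ?thesis
  proof (cases "\<gamma> = 0")
    case True then show ?thesis by (simp add: hfun_def)
  next
    case False
    then have gp: "0 < \<gamma>" using g by simp
    show ?thesis
    proof (cases "\<gamma> \<le> G")
      case True
      have "ln \<gamma> \<le> ln G" using True gp by simp
      then show ?thesis using True gp
        by (simp add: hfun_def w_tilde_def G_def[symmetric] ln_div)
    next
      case False
      have wt: "w_tilde rmax \<gamma> = (G/\<gamma>)^2" using False by (simp add: w_tilde_def G_def)
      have pos: "0 < (G/\<gamma>)^2" using G gp by simp
      have "ln (1 / (G/\<gamma>)^2) + 2 * ln (1/\<gamma>) = - 2 * ln G"
        using G gp by (simp add: ln_div ln_realpow power_divide ln_mult)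
      then show ?thesis using wt pos gp by (simp add: hfun_def G_def)
    qed
  qed
qed

theorem mainTheorem10:
  fixes rmax :: real
  assumes "rmax \<ge> 1"
  shows "w_tilde rmax \<in> Wset rmax \<and>
    (\<forall>w\<in>Wset rmax. (INF \<gamma>\<in>{0..1}. hfun \<gamma> (w_tilde rmax)) \<ge> (INF \<gamma>\<in>{0..1}. hfun \<gamma> w))"
proof (intro conjI ballI)
  show "w_tilde rmax \<in> Wset rmax" by (rule part1[OF assms])
next
  fix w assume "w \<in> Wset rmax"
  then obtain r where adm: "admissible_density r rmax" and wr: "\<And>\<gamma>. \<gamma> \<in> {0..1} \<Longrightarrow> w \<gamma> = width r rmax \<gamma>"
    unfolding Wset_def by blast
  define G where "G = gamma_tilde rmax"
  have G: "0 < G" "G \<le> 1" using gt_props[OF assms] by (auto simp: G_def)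
  define m where "m = ereal (- 2 * ln G)"
  have m: "m \<le> (INF \<gamma>\<in>{0..1}. hfun \<gamma> (w_tilde rmax))"
    unfolding m_def G_def by (rule INF_greatest) (rule h_tilde_lower[OF assms])
  show "(INF \<gamma>\<in>{0..1}. hfun \<gamma> w) \<le> (INF \<gamma>\<in>{0..1}. hfun \<gamma> (w_tilde rmax))"
  proof (rule ccontr)
    assume "\<not> ?thesis"
    then have "m < (INF \<gamma>\<in>{0..1}. hfun \<gamma> w)" using m by auto
    then obtain t where t: "m < ereal t" "ereal t < (INF \<gamma>\<in>{0..1}. hfun \<gamma> w)"
      using ereal_dense2 by blast
    define s where "s = exp (- t / 2)"
    have sp: "0 < s" by (simp add: s_def)
    have s2: "s^2 = exp (- t)" unfolding s_def by (simp add: power2_eq_square exp_add[symmetric])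
    have "- t / 2 < ln G" using t(1) by (simp add: m_def)
    then have sG: "s < G" unfolding s_def using G by (metis exp_less_cancel_iff exp_ln)
    have wb: "width r rmax \<gamma> \<le> s^2/\<gamma>^2" if g: "0 < \<gamma>" "\<gamma> \<le> 1" for \<gamma>
    proof -
      have wg: "w \<gamma> = width r rmax \<gamma>" using wr g by simp
      show ?thesis
      proof (cases "w \<gamma> > 0")
        case False
        then show ?thesis using wg sp g by (smt (verit) divide_nonneg_pos zero_less_power)
      next
        case True
        have "ereal t < hfun \<gamma> w"
          using t(2) INF_lower[of \<gamma> "{0..1}" "\<lambda>\<gamma>. hfun \<gamma> w"] g by auto
        then have lt: "t < ln (1 / w \<gamma>) + 2 * ln (1 / \<gamma>)" using True g by (simp add: hfun_def)
        have "ln (1 / w \<gamma>) + 2 * ln (1 / \<gamma>) = - ln (w \<gamma> * \<gamma>^2)"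
          using True g by (simp add: ln_div ln_mult ln_realpow)
        with lt have "ln (w \<gamma> * \<gamma>^2) < - t" by simp
        then have "w \<gamma> * \<gamma>^2 < exp (- t)" using True g
          by (metis exp_less_cancel_iff exp_ln mult_pos_pos zero_less_power)
        then have "w \<gamma> < s^2/\<gamma>^2" using g s2 by (simp add: field_simps)
        then show ?thesis using wg by simp
      qed
    qed
    show False by (rule part2[OF assms adm sp sG[unfolded G_def] wb])
  qed
qed

end
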